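(* Let $(M,g)$ be a Riemannian manifold without boundary, isometrically embedded in $\mathbb{R}^N$, carrying a foliation given by an integrable subbundle $E\subset TM$, with mean curvature $H$ of the leaves (as defined below). Then for every $v\in\mathbb{R}^N$, $$\langle H,v\rangle=-\mathrm{div}_E(\tilde P(v)),$$ where $\tilde P(v)$ denotes the section $m\mapsto \tilde P(m)v$ of $E$.
   Context: For $m\in M$, $P(m):\mathbb{R}^N\to T_mM$ is orthogonal projection, $\pi:TM\to E$ is orthogonal projection, and $\tilde P=\pi\circ P$ (so $\tilde P(m):\mathbb{R}^N\to E_m$ is orthogonal projection). $\nabla$ is the Levi-Civita connection, $\nabla^E_VY=\pi\nabla_VY$ for $Y\in\Gamma(E)$, and $\mathrm{div}_E Y=\mathrm{Tr}_E\,g(\nabla^E_{\cdot}Y,\cdot)$ (trace over $E$). Let $\nu(E)=\{(x,v): x\in M,\ v\in\mathbb{R}^N,\ v\perp E_x\}$. The second fundamental form is the unique $\alpha\in\Gamma(E^*\otimes E^*\otimes\nu(E))$ with $\langle\alpha(X,Y),N\rangle=g(\tilde P\,dN(X),Y)$ for all $X,Y\in\Gamma(E)$ and $N\in\Gamma(\nu(E))$ (here $dN$ is the derivative of $N$ as an $\mathbb{R}^N$-valued function). The mean curvature is $H=\mathrm{Tr}_E(\alpha)$; $\langle\cdot,\cdot\rangle$ is the Euclidean inner product. *)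

theory Defs
  imports "HOL-Analysis.Analysis"
begin

text \<open>Ambient space: R^N is modelled as real^'n with the Euclidean inner product.\<close>

primrec Ck_on :: "nat \<Rightarrow> 'a::real_normed_vector set \<Rightarrow> ('a \<Rightarrow> 'b::real_normed_vector) \<Rightarrow> bool" where
  "Ck_on 0 U f = continuous_on U f"
| "Ck_on (Suc k) U f =
     (\<exists>f'. (\<forall>x\<in>U. (f has_derivative f' x) (at x)) \<and> (\<forall>v. Ck_on k U (\<lambda>x. f' x v)))"

definition smooth_on :: "'a::real_normed_vector set \<Rightarrow> ('a \<Rightarrow> 'b::real_normed_vector) \<Rightarrow> bool" where
  "smooth_on U f \<longleftrightarrow> (\<forall>k. Ck_on k U f)"

definition embedded_submanifold :: "(real^'n) set \<Rightarrow> nat \<Rightarrow> bool" where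
  "embedded_submanifold M d \<longleftrightarrow>
     (\<forall>p\<in>M. \<exists>U U' (\<Phi>::real^'n \<Rightarrow> real^'n) \<Psi> L.
        open U \<and> open U' \<and> p \<in> U \<and> subspace L \<and> dim L = d \<and>
        smooth_on U \<Phi> \<and> smooth_on U' \<Psi> \<and> \<Phi> ` U = U' \<and>
        (\<forall>x\<in>U. \<Psi> (\<Phi> x) = x) \<and> (\<forall>y\<in>U'. \<Phi> (\<Psi> y) = y) \<and>
        \<Phi> ` (M \<inter> U) = U' \<inter> L)"

definition curve_in :: "(real^'n) set \<Rightarrow> (real^'n) \<Rightarrow> (real \<Rightarrow> real^'n) \<Rightarrow> real \<Rightarrow> bool" where
  "curve_in M p \<gamma> \<epsilon> \<longleftrightarrow> \<epsilon> > 0 \<and> smooth_on {-\<epsilon><..<\<epsilon>} \<gamma> \<and> \<gamma> ` {-\<epsilon><..<\<epsilon>} \<subseteq> M \<and> \<gamma> 0 = p"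

definition tangent_space :: "(real^'n) set \<Rightarrow> real^'n \<Rightarrow> (real^'n) set" where
  "tangent_space M p = {v. \<exists>\<gamma> \<epsilon>. curve_in M p \<gamma> \<epsilon> \<and> (\<gamma> has_vector_derivative v) (at 0)}"

definition smooth_on_M :: "(real^'n) set \<Rightarrow> (real^'n \<Rightarrow> 'b::real_normed_vector) \<Rightarrow> bool" where
  "smooth_on_M M f \<longleftrightarrow>
     (\<forall>p\<in>M. \<exists>U F. open U \<and> p \<in> U \<and> smooth_on U F \<and> (\<forall>x\<in>M \<inter> U. F x = f x))"

definition dM :: "(real^'n) set \<Rightarrow> (real^'n \<Rightarrow> 'b::real_normed_vector) \<Rightarrow> real^'n \<Rightarrow> real^'n \<Rightarrow> 'b" where
  "dM M f p v = (THE w. \<forall>\<gamma> \<epsilon>. curve_in M p \<gamma> \<epsilon> \<and> (\<gamma> has_vector_derivative v) (at 0)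
                     \<longrightarrow> ((f \<circ> \<gamma>) has_vector_derivative w) (at 0))"

definition vector_field :: "(real^'n) set \<Rightarrow> (real^'n \<Rightarrow> real^'n) \<Rightarrow> bool" where
  "vector_field M X \<longleftrightarrow> smooth_on_M M X \<and> (\<forall>p\<in>M. X p \<in> tangent_space M p)"

definition proj_onto :: "(real^'n) set \<Rightarrow> real^'n \<Rightarrow> real^'n" where
  "proj_onto S v = (THE w. w \<in> S \<and> (\<forall>s\<in>S. (v - w) \<bullet> s = 0))"

definition onb :: "(real^'n) set \<Rightarrow> (real^'n) set \<Rightarrow> bool" where
  "onb S B \<longleftrightarrow> finite B \<and> B \<subseteq> S \<and> span B = S \<and> (\<forall>b\<in>B. norm b = 1) \<and> pairwise orthogonal B"

definition subbundle :: "(real^'n) set \<Rightarrow> (real^'n \<Rightarrow> (real^'n) set) \<Rightarrow> bool" where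
  "subbundle M E \<longleftrightarrow>
     (\<forall>p\<in>M. subspace (E p) \<and> E p \<subseteq> tangent_space M p) \<and>
     (\<forall>p\<in>M. \<exists>U k (X :: nat \<Rightarrow> real^'n \<Rightarrow> real^'n). open U \<and> p \<in> U \<and>
        (\<forall>i<k. vector_field M (X i)) \<and>
        (\<forall>q\<in>M \<inter> U. span {X i q | i. i < k} = E q \<and> dim (E q) = k))"

definition section_of :: "(real^'n) set \<Rightarrow> (real^'n \<Rightarrow> (real^'n) set) \<Rightarrow> (real^'n \<Rightarrow> real^'n) \<Rightarrow> bool" where
  "section_of M E X \<longleftrightarrow> smooth_on_M M X \<and> (\<forall>p\<in>M. X p \<in> E p)"

definition normal_section :: "(real^'n) set \<Rightarrow> (real^'n \<Rightarrow> (real^'n) set) \<Rightarrow> (real^'n \<Rightarrow> real^'n) \<Rightarrow> bool" where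
  "normal_section M E N \<longleftrightarrow> smooth_on_M M N \<and> (\<forall>p\<in>M. \<forall>e\<in>E p. N p \<bullet> e = 0)"

definition lie_bracket :: "(real^'n) set \<Rightarrow> (real^'n \<Rightarrow> real^'n) \<Rightarrow> (real^'n \<Rightarrow> real^'n) \<Rightarrow> real^'n \<Rightarrow> real^'n" where
  "lie_bracket M X Y p = dM M Y p (X p) - dM M X p (Y p)"

text \<open>Integrable (= involutive, Frobenius) subbundle.\<close>
definition involutive_subbundle :: "(real^'n) set \<Rightarrow> (real^'n \<Rightarrow> (real^'n) set) \<Rightarrow> bool" where
  "involutive_subbundle M E \<longleftrightarrow> (\<forall>X Y. section_of M E X \<and> section_of M E Y \<longrightarrow>
       (\<forall>p\<in>M. lie_bracket M X Y p \<in> E p))"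

definition levi_civita :: "(real^'n) set \<Rightarrow>
   ((real^'n \<Rightarrow> real^'n) \<Rightarrow> (real^'n \<Rightarrow> real^'n) \<Rightarrow> real^'n \<Rightarrow> real^'n) \<Rightarrow> bool" where
  "levi_civita M nabla \<longleftrightarrow>
     (\<forall>X Y. vector_field M X \<and> vector_field M Y \<longrightarrow> vector_field M (nabla X Y)) \<and>
     (\<forall>X1 X2 Y f h. vector_field M X1 \<and> vector_field M X2 \<and> vector_field M Y \<and>
         smooth_on_M M (f::real^'n \<Rightarrow> real) \<and> smooth_on_M M (h::real^'n \<Rightarrow> real) \<longrightarrow>
        (\<forall>p\<in>M. nabla (\<lambda>q. f q *\<^sub>R X1 q + h q *\<^sub>R X2 q) Y p
                 = f p *\<^sub>R nabla X1 Y p + h p *\<^sub>R nabla X2 Y p)) \<and>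
     (\<forall>X Y1 Y2 a b. vector_field M X \<and> vector_field M Y1 \<and> vector_field M Y2 \<longrightarrow>
        (\<forall>p\<in>M. nabla X (\<lambda>q. a *\<^sub>R Y1 q + b *\<^sub>R Y2 q) p
                 = a *\<^sub>R nabla X Y1 p + b *\<^sub>R nabla X Y2 p)) \<and>
     (\<forall>X Y f. vector_field M X \<and> vector_field M Y \<and> smooth_on_M M (f::real^'n \<Rightarrow> real) \<longrightarrow>
        (\<forall>p\<in>M. nabla X (\<lambda>q. f q *\<^sub>R Y q) p = dM M f p (X p) *\<^sub>R Y p + f p *\<^sub>R nabla X Y p)) \<and>
     (\<forall>X Y. vector_field M X \<and> vector_field M Y \<longrightarrow>
        (\<forall>p\<in>M. nabla X Y p - nabla Y X p = lie_bracket M X Y p)) \<and>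
     (\<forall>X Y Z. vector_field M X \<and> vector_field M Y \<and> vector_field M Z \<longrightarrow>
        (\<forall>p\<in>M. dM M (\<lambda>q. Y q \<bullet> Z q) p (X p) = nabla X Y p \<bullet> Z p + Y p \<bullet> nabla X Z p))"

text \<open>nabla^E_V Y = pi (nabla_V Y); div_E Y (m) = sum over an orthonormal basis e_i of E_m of
  g(nabla^E_{e_i} Y, e_i), where nabla_{e_i} Y (m) is computed with any vector field
  taking the value e_i at m (the connection is tensorial in its first argument).\<close>
definition div_E :: "(real^'n) set \<Rightarrow> (real^'n \<Rightarrow> (real^'n) set) \<Rightarrow>
   ((real^'n \<Rightarrow> real^'n) \<Rightarrow> (real^'n \<Rightarrow> real^'n) \<Rightarrow> real^'n \<Rightarrow> real^'n) \<Rightarrow>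
   (real^'n \<Rightarrow> real^'n) \<Rightarrow> real^'n \<Rightarrow> real" where
  "div_E M E nabla Y m =
     (let B = (SOME B. onb (E m) B) in
      \<Sum>b\<in>B. proj_onto (E m) (nabla (SOME X. vector_field M X \<and> X m = b) Y m) \<bullet> b)"

definition second_fundamental_form :: "(real^'n) set \<Rightarrow> (real^'n \<Rightarrow> (real^'n) set) \<Rightarrow>
   (real^'n \<Rightarrow> real^'n \<Rightarrow> real^'n \<Rightarrow> real^'n) \<Rightarrow> bool" where
  "second_fundamental_form M E alpha \<longleftrightarrow>
     (\<forall>m\<in>M. \<forall>x\<in>E m. \<forall>y\<in>E m. \<forall>e\<in>E m. alpha m x y \<bullet> e = 0) \<and>
     (\<forall>m\<in>M. \<forall>y\<in>E m. linear (\<lambda>x. alpha m x y)) \<and>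
     (\<forall>m\<in>M. \<forall>x\<in>E m. linear (\<lambda>y. alpha m x y)) \<and>
     (\<forall>X Y. section_of M E X \<and> section_of M E Y \<longrightarrow> smooth_on_M M (\<lambda>p. alpha p (X p) (Y p))) \<and>
     (\<forall>X Y N. section_of M E X \<and> section_of M E Y \<and> normal_section M E N \<longrightarrow>
        (\<forall>m\<in>M. alpha m (X m) (Y m) \<bullet> N m = proj_onto (E m) (dM M N m (X m)) \<bullet> Y m))"

definition mean_curvature :: "(real^'n \<Rightarrow> (real^'n) set) \<Rightarrow>
   (real^'n \<Rightarrow> real^'n \<Rightarrow> real^'n \<Rightarrow> real^'n) \<Rightarrow> real^'n \<Rightarrow> real^'n" where
  "mean_curvature E alpha m = (let B = (SOME B. onb (E m) B) in \<Sum>b\<in>B. alpha m b b)"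

end

theory Submission
  imports Defs
begin



lemma proj_props:
  fixes S :: "(real^'n) set"
  assumes "subspace S"
  shows "proj_onto S v \<in> S \<and> (\<forall>s\<in>S. (v - proj_onto S v) \<bullet> s = 0)"
proof -
  obtain y z where y: "y \<in> span S" and z: "\<And>w. w \<in> span S \<Longrightarrow> orthogonal z w" and vyz: "v = y + z"
    using orthogonal_subspace_decomp_exists by blast
  have sp: "span S = S" using assms by (simp add: span_eq_iff)
  have ex: "y \<in> S \<and> (\<forall>s\<in>S. (v - y) \<bullet> s = 0)"
    using y z vyz sp by (auto simp: orthogonal_def)
  have un: "w = y" if "w \<in> S \<and> (\<forall>s\<in>S. (v - w) \<bullet> s = 0)" for w
  proof -
    have d: "y - w \<in> S" using that ex assms by (simp add: subspace_diff)
    have "(v - w) \<bullet> (y - w) - (v - y) \<bullet> (y - w) = 0" using that ex d by auto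
    hence "(y - w) \<bullet> (y - w) = 0" by (simp add: inner_diff_left inner_diff_right inner_commute)
    thus ?thesis by simp
  qed
  have "proj_onto S v = y" unfolding proj_onto_def
    using ex un by (rule the_equality) 
  thus ?thesis using ex by simp
qed

lemma proj_eq:
  fixes S :: "(real^'n) set"
  assumes "subspace S" "w \<in> S" "\<forall>s\<in>S. (v - w) \<bullet> s = 0"
  shows "proj_onto S v = w"
proof -
  have p: "proj_onto S v \<in> S" "\<forall>s\<in>S. (v - proj_onto S v) \<bullet> s = 0" using proj_props[OF assms(1)] by auto
  have d: "w - proj_onto S v \<in> S" using p assms by (simp add: subspace_diff)
  have "(v - proj_onto S v) \<bullet> (w - proj_onto S v) - (v - w) \<bullet> (w - proj_onto S v) = 0" using p assms d by auto
  hence "(w - proj_onto S v) \<bullet> (w - proj_onto S v) = 0" by (simp add: inner_diff_left inner_diff_right inner_commute)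
  thus ?thesis by simp
qed

lemma proj_inner:
  fixes S :: "(real^'n) set"
  assumes "subspace S" "b \<in> S"
  shows "proj_onto S v \<bullet> b = v \<bullet> b"
  using proj_props[OF assms(1), of v] assms(2) by (simp add: inner_diff_left)



lemma Ck_mono: "Ck_on (Suc k) U f \<Longrightarrow> Ck_on k U f"
proof (induction k arbitrary: f)
  case 0
  then obtain f' where "\<forall>x\<in>U. (f has_derivative f' x) (at x)" by auto
  hence "\<forall>x\<in>U. isCont f x" using has_derivative_continuous by blast
  thus ?case by (simp add: continuous_at_imp_continuous_on)
next
  case (Suc k)
  then obtain f' where "\<forall>x\<in>U. (f has_derivative f' x) (at x)" "\<forall>v. Ck_on (Suc k) U (\<lambda>x. f' x v)"
    by auto
  thus ?case using Suc.IH by auto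
qed

lemma Ck_mono_le: "Ck_on k U f \<Longrightarrow> j \<le> k \<Longrightarrow> Ck_on j U f"
proof (induction k)
  case 0 thus ?case by simp
next
  case (Suc k)
  show ?case
  proof (cases "j = Suc k")
    case True thus ?thesis using Suc.prems by simp
  next
    case False thus ?thesis using Suc Ck_mono[of k U f] by simp
  qed
qed

lemma Ck_continuous: "Ck_on k U f \<Longrightarrow> continuous_on U f"
  using Ck_mono_le[of k U f 0] by simp

lemma Ck_subset: "Ck_on k U f \<Longrightarrow> V \<subseteq> U \<Longrightarrow> Ck_on k V f"
proof (induction k arbitrary: f)
  case 0 thus ?case by (auto intro: continuous_on_subset)
next
  case (Suc k)
  from Suc.prems obtain f' where f: "\<forall>x\<in>U. (f has_derivative f' x) (at x)" "\<forall>v. Ck_on k U (\<lambda>x. f' x v)"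
     by auto
  have "\<forall>x\<in>V. (f has_derivative f' x) (at x)" "\<forall>v. Ck_on k V (\<lambda>x. f' x v)"
    using f Suc.prems(2) Suc.IH by auto
  thus ?case unfolding Ck_on.simps by blast
qed

lemma Ck_const: "Ck_on k U (\<lambda>x. c)"
proof (induction k arbitrary: c)
  case 0 thus ?case by simp
next
  case (Suc k)
  show ?case unfolding Ck_on.simps by (rule exI[of _ "\<lambda>x v. 0"]) (auto simp: Suc)
qed

lemma Ck_add: "Ck_on k U f \<Longrightarrow> Ck_on k U g \<Longrightarrow> Ck_on k U (\<lambda>x. f x + g x)"
proof (induction k arbitrary: f g)
  case 0 thus ?case by (simp add: continuous_on_add)
next
  case (Suc k)
  from Suc.prems obtain f' g' where f: "\<forall>x\<in>U. (f has_derivative f' x) (at x)" "\<forall>v. Ck_on k U (\<lambda>x. f' x v)"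
    and g: "\<forall>x\<in>U. (g has_derivative g' x) (at x)" "\<forall>v. Ck_on k U (\<lambda>x. g' x v)" by auto
  show ?case unfolding Ck_on.simps
    by (rule exI[of _ "\<lambda>x v. f' x v + g' x v"]) (use f g Suc.IH in \<open>auto intro: has_derivative_add\<close>)
qed

lemma Ck_linear: "bounded_linear L \<Longrightarrow> Ck_on k U f \<Longrightarrow> Ck_on k U (\<lambda>x. L (f x))"
proof (induction k arbitrary: f)
  case 0 thus ?case by (simp add: bounded_linear.continuous_on)
next
  case (Suc k)
  from Suc.prems obtain f' where f: "\<forall>x\<in>U. (f has_derivative f' x) (at x)" "\<forall>v. Ck_on k U (\<lambda>x. f' x v)"
     by auto
  show ?case unfolding Ck_on.simps
    by (rule exI[of _ "\<lambda>x v. L (f' x v)"])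
       (use f Suc in \<open>auto intro: bounded_linear.has_derivative\<close>)
qed

lemma Ck_bilinear:
  fixes f :: "'a::real_normed_vector \<Rightarrow> 'b::real_normed_vector" and g :: "'a \<Rightarrow> 'c::real_normed_vector"
    and prod :: "'b \<Rightarrow> 'c \<Rightarrow> 'd::real_normed_vector"
  assumes "bounded_bilinear prod"
  shows "Ck_on k U f \<Longrightarrow> Ck_on k U g \<Longrightarrow> Ck_on k U (\<lambda>x. prod (f x) (g x))"
proof (induction k arbitrary: f g)
  case 0 thus ?case using bounded_bilinear.continuous_on[OF assms] by auto
next
  case (Suc k)
  from Suc.prems obtain f' g' where f: "\<forall>x\<in>U. (f has_derivative f' x) (at x)" "\<forall>v. Ck_on k U (\<lambda>x. f' x v)"
    and g: "\<forall>x\<in>U. (g has_derivative g' x) (at x)" "\<forall>v. Ck_on k U (\<lambda>x. g' x v)" by auto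
  have fk: "Ck_on k U f" "Ck_on k U g" using Ck_mono[OF Suc.prems(1)] Ck_mono[OF Suc.prems(2)] by auto
  show ?case unfolding Ck_on.simps
  proof (rule exI[of _ "\<lambda>x v. prod (f x) (g' x v) + prod (f' x v) (g x)"], intro conjI ballI allI)
    fix x assume "x \<in> U"
    thus "((\<lambda>x. prod (f x) (g x)) has_derivative (\<lambda>v. prod (f x) (g' x v) + prod (f' x v) (g x))) (at x)"
      using f g bounded_bilinear.FDERIV[OF assms] by blast
  next
    fix v
    show "Ck_on k U (\<lambda>x. prod (f x) (g' x v) + prod (f' x v) (g x))"
      using f g fk Suc.IH by (intro Ck_add) auto
  qed
qed

lemma Ck_sum: "finite I \<Longrightarrow> (\<And>i. i \<in> I \<Longrightarrow> Ck_on k U (f i)) \<Longrightarrow> Ck_on k U (\<lambda>x. \<Sum>i\<in>I. f i x)"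
proof (induction I rule: finite_induct)
  case empty thus ?case using Ck_const[of k U 0] by simp
next
  case (insert a I)
  have "Ck_on k U (\<lambda>x. f a x + (\<Sum>i\<in>I. f i x))" using insert by (intro Ck_add) auto
  thus ?case using insert(1,2) by simp
qed

lemma Ck_powr: "Ck_on k U f \<Longrightarrow> \<forall>x\<in>U. f x > (0::real) \<Longrightarrow> Ck_on k U (\<lambda>x. f x powr r)"
proof (induction k arbitrary: f r)
  case 0
  thus ?case by (auto intro!: continuous_intros)
next
  case (Suc k)
  from Suc.prems obtain f' where f: "\<forall>x\<in>U. (f has_derivative f' x) (at x)" "\<forall>v. Ck_on k U (\<lambda>x. f' x v)"
     by auto
  have fk: "Ck_on k U f" using Ck_mono[OF Suc.prems(1)] .
  have d: "((\<lambda>x. f x powr r) has_derivative (\<lambda>v. f' x v * (r * f x powr (r - 1)))) (at x)" if "x \<in> U" for x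
  proof -
    have "((\<lambda>z. z powr r) has_real_derivative r * f x powr (r - 1)) (at (f x))"
      using has_real_derivative_powr[of "f x" r] that Suc.prems(2) by auto
    moreover have "(f has_derivative f' x) (at x)" using f that by auto
    ultimately show ?thesis using DERIV_compose_FDERIV[where f="\<lambda>z. z powr r" and g=f and x=x and s=UNIV] by auto
  qed
  have "Ck_on k U (\<lambda>x. f' x v * (r * f x powr (r - 1)))" for v
  proof -
    have "Ck_on k U (\<lambda>x. f x powr (r - 1))" using Suc.IH[OF fk] Suc.prems(2) by blast
    hence "Ck_on k U (\<lambda>x. r * f x powr (r - 1))"
      using Ck_bilinear[OF bounded_bilinear_mult, OF Ck_const] by blast
    thus ?thesis using f(2) Ck_bilinear[OF bounded_bilinear_mult] by blast
  qed
  thus ?case using d unfolding Ck_on.simps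
    by (intro exI[of _ "\<lambda>x v. f' x v * (r * f x powr (r - 1))"]) auto
qed



lemma curve_chain:
  fixes F :: "real^'n \<Rightarrow> 'b::real_normed_vector"
  assumes "open U" "p \<in> U" "\<forall>x\<in>M\<inter>U. F x = f x" "(F has_derivative F') (at p)"
    and c: "curve_in M p \<gamma> \<epsilon>" and g: "(\<gamma> has_vector_derivative w) (at 0)"
  shows "((f \<circ> \<gamma>) has_vector_derivative F' w) (at 0)"
proof -
  have e: "\<epsilon> > 0" "\<gamma> ` {-\<epsilon><..<\<epsilon>} \<subseteq> M" "\<gamma> 0 = p" using c unfolding curve_in_def by auto
  have "isCont \<gamma> 0" using has_vector_derivative_continuous[OF g] .
  hence "eventually (\<lambda>t. \<gamma> t \<in> U) (at 0)"
    using assms(1,2) e(3) unfolding isCont_def tendsto_def by auto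
  then obtain d where d: "d > 0" "\<And>t. t \<noteq> 0 \<Longrightarrow> dist t 0 < d \<Longrightarrow> \<gamma> t \<in> U"
    unfolding eventually_at by auto
  have ch: "((F \<circ> \<gamma>) has_derivative (F' \<circ> (\<lambda>t. t *\<^sub>R w))) (at 0)"
    using diff_chain_at[of \<gamma> "\<lambda>t. t *\<^sub>R w" 0 F F'] g assms(4) e(3)
    unfolding has_vector_derivative_def by simp
  have lin: "linear F'" using assms(4) has_derivative_linear by blast
  have "(F' \<circ> (\<lambda>t. t *\<^sub>R w)) = (\<lambda>t. t *\<^sub>R F' w)"
    using lin by (auto simp: linear_scale)
  hence ch2: "((F \<circ> \<gamma>) has_vector_derivative F' w) (at 0)"
    using ch unfolding has_vector_derivative_def by simp
  show ?thesis
  proof (rule has_vector_derivative_transform_within[OF ch2, of "min d \<epsilon>"])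
    show "0 < min d \<epsilon>" using d e by simp
    show "(0::real) \<in> UNIV" by simp
    fix t :: real assume "t \<in> UNIV" "dist t 0 < min d \<epsilon>"
    hence "\<gamma> t \<in> U" "\<gamma> t \<in> M" using d e assms(2) by (cases "t = 0"; force simp: dist_real_def)+
    thus "(F \<circ> \<gamma>) t = (f \<circ> \<gamma>) t" using assms(3) by simp
  qed
qed

lemma dM_ext:
  fixes F :: "real^'n \<Rightarrow> 'b::real_normed_vector"
  assumes "open U" "p \<in> U" "\<forall>x\<in>M\<inter>U. F x = f x" "(F has_derivative F') (at p)"
    and w: "w \<in> tangent_space M p"
  shows "dM M f p w = F' w"
  unfolding dM_def
proof (rule the_equality)
  show "\<forall>\<gamma> \<epsilon>. curve_in M p \<gamma> \<epsilon> \<and> (\<gamma> has_vector_derivative w) (at 0) \<longrightarrow>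
      ((f \<circ> \<gamma>) has_vector_derivative F' w) (at 0)"
    using curve_chain[OF assms(1-4)] by blast
  fix z assume z: "\<forall>\<gamma> \<epsilon>. curve_in M p \<gamma> \<epsilon> \<and> (\<gamma> has_vector_derivative w) (at 0) \<longrightarrow>
      ((f \<circ> \<gamma>) has_vector_derivative z) (at 0)"
  obtain \<gamma> \<epsilon> where c: "curve_in M p \<gamma> \<epsilon>" "(\<gamma> has_vector_derivative w) (at 0)"
    using w unfolding tangent_space_def by auto
  show "z = F' w"
    using vector_derivative_unique_at z c curve_chain[OF assms(1-4) c] by blast
qed



definition gsv :: "('x \<Rightarrow> real^'n) \<Rightarrow> ('x \<Rightarrow> real^'n) list \<Rightarrow> 'x \<Rightarrow> real^'n" where
  "gsv f L x = (let u = f x - (\<Sum>j<length L. (f x \<bullet> (L!j) x) *\<^sub>R (L!j) x) in ((u \<bullet> u) powr (-1/2)) *\<^sub>R u)"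

primrec gsl :: "(nat \<Rightarrow> 'x \<Rightarrow> real^'n) \<Rightarrow> nat \<Rightarrow> ('x \<Rightarrow> real^'n) list" where
  "gsl a 0 = []"
| "gsl a (Suc i) = gsl a i @ [gsv (a i) (gsl a i)]"

definition GS :: "(nat \<Rightarrow> 'x \<Rightarrow> real^'n) \<Rightarrow> nat \<Rightarrow> 'x \<Rightarrow> real^'n" where
  "GS a i = gsl a (Suc i) ! i"

lemma gsl_len[simp]: "length (gsl a i) = i"
  by (induction i) auto

lemma gsl_nth: "j < i \<Longrightarrow> gsl a i ! j = GS a j"
proof (induction i)
  case 0 thus ?case by simp
next
  case (Suc i)
  thus ?case by (cases "j = i") (auto simp: GS_def nth_append)
qed

lemma GS_rec: "GS a i x = (let u = a i x - (\<Sum>j<i. (a i x \<bullet> GS a j x) *\<^sub>R GS a j x) in ((u \<bullet> u) powr (-1/2)) *\<^sub>R u)"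
proof -
  have "GS a i x = gsv (a i) (gsl a i) x" by (simp add: GS_def nth_append)
  also have "(\<Sum>j<length (gsl a i). (a i x \<bullet> (gsl a i!j) x) *\<^sub>R (gsl a i!j) x) = (\<Sum>j<i. (a i x \<bullet> GS a j x) *\<^sub>R GS a j x)"
    by (simp add: gsl_nth)
  hence "gsv (a i) (gsl a i) x = (let u = a i x - (\<Sum>j<i. (a i x \<bullet> GS a j x) *\<^sub>R GS a j x) in ((u \<bullet> u) powr (-1/2)) *\<^sub>R u)"
    unfolding gsv_def by simp
  finally show ?thesis .
qed

lemma powr_mhalf: "(x::real) > 0 \<Longrightarrow> x powr (-1/2) = inverse (sqrt x)"
  by (simp add: powr_minus powr_half_sqrt[symmetric])

lemma GS_pointwise:
  fixes a :: "nat \<Rightarrow> 'x \<Rightarrow> real^'n"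
  assumes ind: "\<forall>i<k. a i q \<notin> span ((\<lambda>j. a j q) ` {..<i})" and "i \<le> k"
  shows "(\<forall>j<i. \<forall>l<i. GS a j q \<bullet> GS a l q = (if j = l then 1 else 0)) \<and>
         span ((\<lambda>j. GS a j q) ` {..<i}) = span ((\<lambda>j. a j q) ` {..<i})"
  using assms(2)
proof (induction i)
  case 0 thus ?case by simp
next
  case (Suc i)
  hence IH: "\<forall>j<i. \<forall>l<i. GS a j q \<bullet> GS a l q = (if j = l then 1 else 0)"
    "span ((\<lambda>j. GS a j q) ` {..<i}) = span ((\<lambda>j. a j q) ` {..<i})" and ik: "i < k" by auto
  define s where "s = (\<Sum>j<i. (a i q \<bullet> GS a j q) *\<^sub>R GS a j q)"
  define u where "u = a i q - s"
  have s_span: "s \<in> span ((\<lambda>j. GS a j q) ` {..<i})"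
    unfolding s_def by (intro span_sum span_scale span_base) auto
  have u0: "u \<noteq> 0"
  proof
    assume "u = 0"
    hence "a i q = s" unfolding u_def by simp
    thus False using s_span IH(2) ind ik by auto
  qed
  have uu: "u \<bullet> u > 0" using u0 by simp
  have Ei: "GS a i q = inverse (norm u) *\<^sub>R u"
    using GS_rec[of a i q] powr_mhalf[OF uu] unfolding u_def s_def Let_def
    by (simp add: norm_eq_sqrt_inner)
  have uorth: "u \<bullet> GS a l q = 0" if "l < i" for l
  proof -
    have "s \<bullet> GS a l q = (\<Sum>j<i. (a i q \<bullet> GS a j q) * (GS a j q \<bullet> GS a l q))"
      unfolding s_def by (simp add: inner_sum_left)
    also have "\<dots> = (\<Sum>j<i. if j = l then a i q \<bullet> GS a j q else 0)"
      using IH(1) that by (intro sum.cong) auto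
    also have "\<dots> = a i q \<bullet> GS a l q" using that by simp
    finally show ?thesis unfolding u_def by (simp add: inner_diff_left)
  qed
  have Eorth: "GS a i q \<bullet> GS a l q = 0" "GS a l q \<bullet> GS a i q = 0" if "l < i" for l
    using uorth[OF that] Ei by (auto simp: inner_commute)
  have Enorm: "GS a i q \<bullet> GS a i q = 1"
    using Ei u0 by (simp add: power2_norm_eq_inner[symmetric] field_simps)
  have P1: "\<forall>j<Suc i. \<forall>l<Suc i. GS a j q \<bullet> GS a l q = (if j = l then 1 else 0)"
    using IH(1) Eorth Enorm by (auto simp: less_Suc_eq)
  have img: "\<And>f::nat \<Rightarrow> real^'n. f ` {..<Suc i} = insert (f i) (f ` {..<i})"
    by (auto simp: lessThan_Suc)
  define SE where "SE = (\<lambda>j. GS a j q) ` {..<i}"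
  define SA where "SA = (\<lambda>j. a j q) ` {..<i}"
  have IH2: "span SE = span SA" using IH(2) unfolding SE_def SA_def .
  have sE: "s \<in> span SE" using s_span unfolding SE_def .
  have u_eq: "u = norm u *\<^sub>R GS a i q" using Ei u0 by simp
  have A1: "span SE \<subseteq> span (insert (a i q) SA)" using IH2 span_mono[of SA "insert (a i q) SA"] by auto
  have A2: "span SA \<subseteq> span (insert (GS a i q) SE)" using IH2 span_mono[of SE "insert (GS a i q) SE"] by auto
  have "a i q \<in> span (insert (a i q) SA)" by (simp add: span_base)
  moreover have "s \<in> span (insert (a i q) SA)" using A1 sE by auto
  ultimately have "u \<in> span (insert (a i q) SA)" unfolding u_def by (rule span_diff)
  hence g1: "GS a i q \<in> span (insert (a i q) SA)" using Ei by (simp add: span_scale)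
  have "s \<in> span (insert (GS a i q) SE)" using sE span_mono[of SE "insert (GS a i q) SE"] by auto
  moreover have "u \<in> span (insert (GS a i q) SE)" 
    by (subst u_eq) (intro span_scale span_base, simp)
  ultimately have "u + s \<in> span (insert (GS a i q) SE)" by (intro span_add) 
  hence g2: "a i q \<in> span (insert (GS a i q) SE)" unfolding u_def by simp
  have "insert (GS a i q) SE \<subseteq> span (insert (a i q) SA)"
    using g1 A1 span_superset[of SE] by auto
  hence L: "span (insert (GS a i q) SE) \<subseteq> span (insert (a i q) SA)"
    by (simp add: span_minimal subspace_span)
  have "insert (a i q) SA \<subseteq> span (insert (GS a i q) SE)"
    using g2 A2 span_superset[of SA] by auto
  hence R: "span (insert (a i q) SA) \<subseteq> span (insert (GS a i q) SE)"
    by (simp add: span_minimal subspace_span)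
  have "(\<lambda>j. GS a j q) ` {..<Suc i} = insert (GS a i q) SE" unfolding SE_def by (auto simp: lessThan_Suc)
  moreover have "(\<lambda>j. a j q) ` {..<Suc i} = insert (a i q) SA" unfolding SA_def by (auto simp: lessThan_Suc)
  ultimately show ?case using P1 L R by auto
qed




lemma sm_const: "smooth_on U (\<lambda>x. c)" unfolding smooth_on_def using Ck_const by blast
lemma sm_add: "smooth_on U f \<Longrightarrow> smooth_on U g \<Longrightarrow> smooth_on U (\<lambda>x. f x + g x)"
  unfolding smooth_on_def using Ck_add by blast
lemma sm_linear: "bounded_linear L \<Longrightarrow> smooth_on U f \<Longrightarrow> smooth_on U (\<lambda>x. L (f x))"
  unfolding smooth_on_def using Ck_linear by blast
lemma sm_bilinear:
  fixes f :: "'a::real_normed_vector \<Rightarrow> 'b::real_normed_vector" and g :: "'a \<Rightarrow> 'c::real_normed_vector"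
    and prod :: "'b \<Rightarrow> 'c \<Rightarrow> 'd::real_normed_vector"
  shows "bounded_bilinear prod \<Longrightarrow> smooth_on U f \<Longrightarrow> smooth_on U g \<Longrightarrow> smooth_on U (\<lambda>x. prod (f x) (g x))"
  unfolding smooth_on_def using Ck_bilinear by blast
lemma sm_scaleR: "smooth_on U f \<Longrightarrow> smooth_on U g \<Longrightarrow> smooth_on U (\<lambda>x. f x *\<^sub>R g x)"
  by (rule sm_bilinear[OF bounded_bilinear_scaleR])
lemma sm_minus: "smooth_on U f \<Longrightarrow> smooth_on U (\<lambda>x. - f x)"
proof -
  assume "smooth_on U f"
  hence "smooth_on U (\<lambda>x. (-1::real) *\<^sub>R f x)" by (intro sm_scaleR sm_const)
  thus ?thesis by simp
qed
lemma sm_diff: "smooth_on U f \<Longrightarrow> smooth_on U g \<Longrightarrow> smooth_on U (\<lambda>x. f x - g x)"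
proof -
  assume "smooth_on U f" "smooth_on U g"
  hence "smooth_on U (\<lambda>x. f x + - g x)" by (intro sm_add sm_minus)
  thus ?thesis by simp
qed
lemma sm_inner: "smooth_on U f \<Longrightarrow> smooth_on U g \<Longrightarrow> smooth_on U (\<lambda>x. f x \<bullet> g x)"
  by (rule sm_bilinear[OF bounded_bilinear_inner])
lemma sm_sum: "finite I \<Longrightarrow> (\<And>i. i \<in> I \<Longrightarrow> smooth_on U (f i)) \<Longrightarrow> smooth_on U (\<lambda>x. \<Sum>i\<in>I. f i x)"
  unfolding smooth_on_def using Ck_sum by blast
lemma sm_powr: "smooth_on U f \<Longrightarrow> \<forall>x\<in>U. f x > (0::real) \<Longrightarrow> smooth_on U (\<lambda>x. f x powr r)"
  unfolding smooth_on_def using Ck_powr by blast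
lemma sm_subset: "smooth_on U f \<Longrightarrow> V \<subseteq> U \<Longrightarrow> smooth_on V f"
  by (meson smooth_on_def Ck_subset)
lemma sm_cont: "smooth_on U f \<Longrightarrow> continuous_on U f"
  by (meson smooth_on_def Ck_continuous)
lemma sm_deriv: "smooth_on U f \<Longrightarrow> x \<in> U \<Longrightarrow> \<exists>f'. (f has_derivative f') (at x)"
  unfolding smooth_on_def by (metis Ck_on.simps(2))

lemma frame_indep:
  fixes b :: "nat \<Rightarrow> real^'n"
  assumes "span (b ` {..<k}) = S" "dim S = k"
  shows "\<forall>i<k. b i \<notin> span (b ` {..<i})"
proof -
  let ?B = "b ` {..<k}"
  have fB: "finite ?B" by simp
  have cardle: "card ?B \<le> k" using card_image_le[of "{..<k}" b] by simp
  have B1: "?B \<subseteq> S" using span_superset[of ?B] unfolding assms(1) .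
  have B2: "S \<subseteq> span ?B" using assms(1) by simp
  have "dim S \<le> card ?B" by (rule dim_le_card[OF B2 fB])
  hence cB: "card ?B = k" using cardle assms(2) by simp
  hence inj: "inj_on b {..<k}" by (intro eq_card_imp_inj_on) simp_all
  have ind: "independent ?B"
    using card_le_dim_spanning[OF B1 B2 fB] cB assms(2) by simp
  show ?thesis
  proof (intro allI impI)
    fix i assume i: "i < k"
    have sub: "b ` {..<i} \<subseteq> ?B - {b i}"
    proof
      fix x assume "x \<in> b ` {..<i}"
      then obtain j where j: "j < i" "x = b j" by auto
      have "b j \<noteq> b i" using inj i j(1) unfolding inj_on_def by (metis lessThan_iff less_trans less_irrefl)
      thus "x \<in> ?B - {b i}" using j i by auto
    qed
    have "b i \<in> ?B" using i by simp
    hence "b i \<notin> span (?B - {b i})" using ind unfolding dependent_def by blast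
    thus "b i \<notin> span (b ` {..<i})" using span_mono[OF sub] by blast
  qed
qed

lemma proj_onb_sum:
  fixes e :: "nat \<Rightarrow> real^'n"
  assumes "subspace S" "span (e ` {..<k}) = S"
    and on: "\<forall>j<k. \<forall>l<k. e j \<bullet> e l = (if j = l then 1 else 0)"
  shows "proj_onto S w = (\<Sum>j<k. (w \<bullet> e j) *\<^sub>R e j)"
proof (rule proj_eq[OF assms(1)])
  show "(\<Sum>j<k. (w \<bullet> e j) *\<^sub>R e j) \<in> S"
    unfolding assms(2)[symmetric] by (rule span_sum) (auto intro: span_scale span_base)
  have z: "(w - (\<Sum>j<k. (w \<bullet> e j) *\<^sub>R e j)) \<bullet> e l = 0" if "l < k" for l
  proof -
    have "(\<Sum>j<k. (w \<bullet> e j) *\<^sub>R e j) \<bullet> e l = (\<Sum>j<k. (w \<bullet> e j) * (e j \<bullet> e l))"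
      by (simp add: inner_sum_left)
    also have "\<dots> = (\<Sum>j<k. if j = l then w \<bullet> e j else 0)" using on that by (intro sum.cong) auto
    also have "\<dots> = w \<bullet> e l" using that by simp
    finally show ?thesis by (simp add: inner_diff_left)
  qed
  show "\<forall>s\<in>S. (w - (\<Sum>j<k. (w \<bullet> e j) *\<^sub>R e j)) \<bullet> s = 0"
  proof
    fix s assume "s \<in> S"
    hence "s \<in> span (e ` {..<k})" using assms(2) by simp
    moreover have "\<And>y. y \<in> e ` {..<k} \<Longrightarrow> orthogonal (w - (\<Sum>j<k. (w \<bullet> e j) *\<^sub>R e j)) y"
    proof -
      fix y assume "y \<in> e ` {..<k}"
      then obtain l where "l < k" "y = e l" by auto
      thus "orthogonal (w - (\<Sum>j<k. (w \<bullet> e j) *\<^sub>R e j)) y" using z unfolding orthogonal_def by simp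
    qed
    ultimately have "orthogonal (w - (\<Sum>j<k. (w \<bullet> e j) *\<^sub>R e j)) s"
      by (rule orthogonal_to_span)
    thus "(w - (\<Sum>j<k. (w \<bullet> e j) *\<^sub>R e j)) \<bullet> s = 0" by (simp add: orthogonal_def)
  qed
qed




lemma proj_smooth_loc:
  assumes sb: "subbundle M E" and p: "p \<in> M"
  shows "\<exists>U F. open U \<and> p \<in> U \<and> smooth_on U F \<and> (\<forall>x\<in>M \<inter> U. F x = proj_onto (E x) w)"
proof -
  have sub: "\<forall>q\<in>M. subspace (E q)" using sb unfolding subbundle_def by blast
  obtain U0 k X where U0: "open U0" "p \<in> U0" and vf: "\<forall>i<k. vector_field M (X i)"
    and fr: "\<forall>q\<in>M \<inter> U0. span {X i q | i. i < k} = E q \<and> dim (E q) = k"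
  proof -
    have "\<exists>U k (X :: nat \<Rightarrow> real^'a \<Rightarrow> real^'a). open U \<and> p \<in> U \<and>
        (\<forall>i<k. vector_field M (X i)) \<and>
        (\<forall>q\<in>M \<inter> U. span {X i q | i. i < k} = E q \<and> dim (E q) = k)"
      using sb p unfolding subbundle_def by simp
    thus ?thesis using that by blast
  qed
  have "\<forall>i. i < k \<longrightarrow> (\<exists>UF. open (fst UF) \<and> p \<in> fst UF \<and> smooth_on (fst UF) (snd UF) \<and>
            (\<forall>x\<in>M \<inter> fst UF. snd UF x = X i x))"
  proof (intro allI impI)
    fix i assume "i < k"
    hence "vector_field M (X i)" using vf by simp
    hence "smooth_on_M M (X i)" unfolding vector_field_def by simp
    hence "\<exists>U F. open U \<and> p \<in> U \<and> smooth_on U F \<and> (\<forall>x\<in>M \<inter> U. F x = X i x)"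
      using p unfolding smooth_on_M_def by simp
    then obtain U F where UF: "open U" "p \<in> U" "smooth_on U F" "\<forall>x\<in>M \<inter> U. F x = X i x"
      by blast
    show "\<exists>UF. open (fst UF) \<and> p \<in> fst UF \<and> smooth_on (fst UF) (snd UF) \<and>
            (\<forall>x\<in>M \<inter> fst UF. snd UF x = X i x)" by (rule exI[of _ "(U, F)"]) (simp add: UF)
  qed
  hence "\<exists>g. \<forall>i. i < k \<longrightarrow> (open (fst (g i)) \<and> p \<in> fst (g i) \<and> smooth_on (fst (g i)) (snd (g i)) \<and>
            (\<forall>x\<in>M \<inter> fst (g i). snd (g i) x = X i x))"
    by (rule choice_iff'[THEN iffD1])
  then obtain g where g: "\<forall>i. i < k \<longrightarrow> (open (fst (g i)) \<and> p \<in> fst (g i) \<and> smooth_on (fst (g i)) (snd (g i)) \<and>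
            (\<forall>x\<in>M \<inter> fst (g i). snd (g i) x = X i x))" by blast
  define UU where "UU i = fst (g i)" for i
  define FF where "FF i = snd (g i)" for i
  have UUo: "\<And>i. i < k \<Longrightarrow> open (UU i) \<and> p \<in> UU i \<and> smooth_on (UU i) (FF i) \<and> (\<forall>x\<in>M \<inter> UU i. FF i x = X i x)"
    using g unfolding UU_def FF_def by blast
  have UU1: "\<And>i. i < k \<Longrightarrow> open (UU i)" and UU2: "\<And>i. i < k \<Longrightarrow> p \<in> UU i"
    and UU3: "\<And>i. i < k \<Longrightarrow> smooth_on (UU i) (FF i)"
    and UU4: "\<And>i x. i < k \<Longrightarrow> x \<in> M \<Longrightarrow> x \<in> UU i \<Longrightarrow> FF i x = X i x"
    using UUo by blast+
  define W0 where "W0 = U0 \<inter> (\<Inter>i\<in>{..<k}. UU i)"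
  have "open (\<Inter>i\<in>{..<k}. UU i)" by (rule open_INT) (simp_all add: UU1)
  hence W0o: "open W0" unfolding W0_def using U0(1) by (rule open_Int[rotated])
  have pW0: "p \<in> W0" unfolding W0_def using U0(2) UU2 by simp
  have W0U: "\<And>i. i < k \<Longrightarrow> W0 \<subseteq> UU i" unfolding W0_def by blast
  have FFs: "\<And>i. i < k \<Longrightarrow> smooth_on W0 (FF i)"
    using UU3 sm_subset W0U by blast
  have FFX: "\<And>i q. i < k \<Longrightarrow> q \<in> M \<inter> W0 \<Longrightarrow> FF i q = X i q"
    using UU4 W0U by blast
  have ptw: "(\<forall>i<k. FF i q \<notin> span ((\<lambda>j. FF j q) ` {..<i})) \<and> span ((\<lambda>j. FF j q) ` {..<k}) = E q"
    if q: "q \<in> M \<inter> W0" for q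
  proof -
    have img: "(\<lambda>j. FF j q) ` {..<k} = {X i q | i. i < k}" using FFX[OF _ q] by auto
    have q0: "q \<in> M \<inter> U0" using q unfolding W0_def by blast
    have sp: "span ((\<lambda>j. FF j q) ` {..<k}) = E q" using fr q0 img by simp
    have dk: "dim (E q) = k" using fr q0 by blast
    show ?thesis using frame_indep[OF sp dk] sp by blast
  qed
  have ind: "i \<le> k \<Longrightarrow> \<exists>V. open V \<and> p \<in> V \<and> V \<subseteq> W0 \<and> (\<forall>j<i. smooth_on V (GS FF j))" for i
  proof (induction i)
    case 0 thus ?case using W0o pW0 by blast
  next
    case (Suc i)
    then obtain V where V: "open V" "p \<in> V" "V \<subseteq> W0" "\<forall>j<i. smooth_on V (GS FF j)" and ik: "i < k" by auto
    define u where "u = (\<lambda>x. FF i x - (\<Sum>j<i. (FF i x \<bullet> GS FF j x) *\<^sub>R GS FF j x))"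
    have us: "smooth_on V u" unfolding u_def
      using V FFs[OF ik] sm_subset
      by (intro sm_diff sm_sum sm_scaleR sm_inner) auto
    have up: "u p \<noteq> 0"
    proof
      assume "u p = 0"
      hence eq: "FF i p = (\<Sum>j<i. (FF i p \<bullet> GS FF j p) *\<^sub>R GS FF j p)" unfolding u_def by simp
      have pMW: "p \<in> M \<inter> W0" using p pW0 by blast
      have "span ((\<lambda>j. GS FF j p) ` {..<i}) = span ((\<lambda>j. FF j p) ` {..<i})"
        using GS_pointwise[of k FF p i] ptw[OF pMW] ik by auto
      moreover have "(\<Sum>j<i. (FF i p \<bullet> GS FF j p) *\<^sub>R GS FF j p) \<in> span ((\<lambda>j. GS FF j p) ` {..<i})"
        by (rule span_sum) (auto intro: span_scale span_base)
      ultimately have "FF i p \<in> span ((\<lambda>j. FF j p) ` {..<i})" using eq by simp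
      thus False using ptw[OF pMW] ik by blast
    qed
    define V' where "V' = (\<lambda>x. u x \<bullet> u x) -` {0<..} \<inter> V"
    have uuc: "continuous_on V (\<lambda>x. u x \<bullet> u x)" using sm_cont[OF sm_inner[OF us us]] .
    have "\<forall>B. open B \<longrightarrow> open ((\<lambda>x. u x \<bullet> u x) -` B \<inter> V)" using continuous_on_open_vimage[OF V(1), THEN iffD1, OF uuc] .
    hence V'o: "open V'" unfolding V'_def using open_greaterThan[of "0::real"] by blast
    have pV': "p \<in> V'" unfolding V'_def using up V(2) by simp
    have V'V: "V' \<subseteq> V" unfolding V'_def by blast
    have GSi: "GS FF i = (\<lambda>x. (u x \<bullet> u x) powr (-1/2) *\<^sub>R u x)"
      by (rule ext) (simp add: GS_rec[of FF i] u_def Let_def)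
    have us': "smooth_on V' u" using sm_subset[OF us V'V] .
    have "smooth_on V' (\<lambda>x. (u x \<bullet> u x) powr (-1/2) *\<^sub>R u x)"
      by (intro sm_scaleR sm_powr sm_inner us') (auto simp: V'_def)
    hence "smooth_on V' (GS FF i)" using GSi by simp
    moreover have "\<forall>j<i. smooth_on V' (GS FF j)" using V(4) sm_subset[OF _ V'V] by blast
    ultimately show ?case using V'o pV' V'V V(3) by (intro exI[of _ V']) (auto simp: less_Suc_eq)
  qed
  obtain V where V: "open V" "p \<in> V" "V \<subseteq> W0" "\<forall>j<k. smooth_on V (GS FF j)" using ind[of k] by blast
  define F where "F = (\<lambda>x. \<Sum>j<k. (w \<bullet> GS FF j x) *\<^sub>R GS FF j x)"
  have Fs: "smooth_on V F" unfolding F_def using V(4) by (intro sm_sum sm_scaleR sm_inner sm_const) auto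
  have Feq: "F x = proj_onto (E x) w" if x: "x \<in> M \<inter> V" for x
  proof -
    have xW: "x \<in> M \<inter> W0" using x V(3) by blast
    have gp: "(\<forall>j<k. \<forall>l<k. GS FF j x \<bullet> GS FF l x = (if j = l then 1 else 0)) \<and>
         span ((\<lambda>j. GS FF j x) ` {..<k}) = span ((\<lambda>j. FF j x) ` {..<k})"
      using GS_pointwise[of k FF x k] ptw[OF xW] by auto
    have "span ((\<lambda>j. GS FF j x) ` {..<k}) = E x" using gp ptw[OF xW] by simp
    thus ?thesis unfolding F_def using proj_onb_sum[of "E x" "\<lambda>j. GS FF j x" k w] gp sub x by auto
  qed
  show ?thesis using V(1,2) Fs Feq by blast
qed

lemma proj_smooth: "subbundle M E \<Longrightarrow> smooth_on_M M (\<lambda>p. proj_onto (E p) w)"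
  unfolding smooth_on_M_def using proj_smooth_loc by blast




lemma smM_ext:
  assumes "smooth_on_M M f" "p \<in> M"
  shows "\<exists>U F F'. open U \<and> p \<in> U \<and> (\<forall>x\<in>M \<inter> U. F x = f x) \<and> (F has_derivative F') (at p)"
proof -
  obtain U F where "open U" "p \<in> U" "smooth_on U F" "\<forall>x\<in>M \<inter> U. F x = f x"
    using assms unfolding smooth_on_M_def by blast
  moreover then obtain F' where "(F has_derivative F') (at p)" using sm_deriv by blast
  ultimately show ?thesis by blast
qed

theorem mainTheorem3:
  fixes M :: "(real^'n) set" and d :: nat
    and E :: "real^'n \<Rightarrow> (real^'n) set"
    and nabla :: "(real^'n \<Rightarrow> real^'n) \<Rightarrow> (real^'n \<Rightarrow> real^'n) \<Rightarrow> real^'n \<Rightarrow> real^'n"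
    and alpha :: "real^'n \<Rightarrow> real^'n \<Rightarrow> real^'n \<Rightarrow> real^'n"
  assumes "embedded_submanifold M d"
    and "subbundle M E"
    and "involutive_subbundle M E"
    and "levi_civita M nabla"
    and "second_fundamental_form M E alpha"
    and "m \<in> M"
  shows "mean_curvature E alpha m \<bullet> v = - div_E M E nabla (\<lambda>p. proj_onto (E p) v) m"
proof -
  note sb = assms(2) and m = assms(6)
  define P where "P w = (\<lambda>p. proj_onto (E p) w)" for w
  have sub: "\<And>q. q \<in> M \<Longrightarrow> subspace (E q)" and ET: "\<And>q. q \<in> M \<Longrightarrow> E q \<subseteq> tangent_space M q"
    using sb unfolding subbundle_def by blast+
  have PE: "P w q \<in> E q" if "q \<in> M" for w q
    unfolding P_def using proj_props[OF sub[OF that]] by blast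
  have Psm: "smooth_on_M M (P w)" for w unfolding P_def using proj_smooth[OF sb] .
  have Pvf: "vector_field M (P w)" for w
    unfolding vector_field_def using Psm PE ET by blast
  have Psec: "section_of M E (P w)" for w
    unfolding section_of_def using Psm PE by blast
  have Pid: "P b m = b" if "b \<in> E m" for b
    unfolding P_def by (rule proj_eq[OF sub[OF m] that]) simp
  define N where "N = (\<lambda>p. v - P v p)"
  have Nsec: "normal_section M E N"
    unfolding normal_section_def
  proof
    show "smooth_on_M M N" unfolding smooth_on_M_def
    proof
      fix p assume p: "p \<in> M"
      obtain U F where "open U" "p \<in> U" "smooth_on U F" "\<forall>x\<in>M \<inter> U. F x = P v x"
        using Psm[of v] p unfolding smooth_on_M_def by blast
      thus "\<exists>U F. open U \<and> p \<in> U \<and> smooth_on U F \<and> (\<forall>x\<in>M \<inter> U. F x = N x)"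
        unfolding N_def by (intro exI[of _ U] exI[of _ "\<lambda>x. v - F x"]) (auto intro: sm_diff sm_const)
    qed
    show "\<forall>p\<in>M. \<forall>e\<in>E p. N p \<bullet> e = 0"
      unfolding N_def P_def using proj_props sub by blast
  qed
  define Y where "Y = P v"
  obtain UY FY FY' where UY: "open UY" "m \<in> UY" "\<forall>x\<in>M \<inter> UY. FY x = Y x" "(FY has_derivative FY') (at m)"
    using smM_ext[OF Psm m] unfolding Y_def by blast
  have dY: "dM M Y m b = FY' b" if "b \<in> tangent_space M m" for b
    using dM_ext[OF UY that] .
  have dN: "dM M N m b = - FY' b" if "b \<in> tangent_space M m" for b
  proof -
    have "\<forall>x\<in>M \<inter> UY. v - FY x = N x" using UY(3) unfolding N_def Y_def by simp
    moreover have "((\<lambda>x. v - FY x) has_derivative (\<lambda>h. 0 - FY' h)) (at m)"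
      by (intro has_derivative_diff has_derivative_const UY(4))
    ultimately show ?thesis using dM_ext[OF UY(1,2) _ _ that, of "\<lambda>x. v - FY x" N "\<lambda>h. 0 - FY' h"] by simp
  qed
  have Tor: "\<And>X Z. vector_field M X \<Longrightarrow> vector_field M Z \<Longrightarrow> nabla X Z m - nabla Z X m = lie_bracket M X Z m"
    using assms(4) m unfolding levi_civita_def by blast
  have MC: "\<And>X Z W. vector_field M X \<Longrightarrow> vector_field M Z \<Longrightarrow> vector_field M W \<Longrightarrow>
      dM M (\<lambda>q. Z q \<bullet> W q) m (X m) = nabla X Z m \<bullet> W m + Z m \<bullet> nabla X W m"
    using assms(4) m unfolding levi_civita_def by blast
  have key1: "nabla X Y m \<bullet> b = dM M Y m b \<bullet> b" if X: "vector_field M X" "X m = b" and b: "b \<in> E m" for X b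
  proof -
    have Yvf: "vector_field M Y" unfolding Y_def by (rule Pvf)
    have Ym: "Y m \<in> tangent_space M m" using PE[OF m] ET[OF m] unfolding Y_def by blast
    have bT: "b \<in> tangent_space M m" using b ET[OF m] by blast
    obtain UX G G' where UX: "open UX" "m \<in> UX" "\<forall>x\<in>M \<inter> UX. G x = X x" "(G has_derivative G') (at m)"
      using smM_ext[of M X m] X(1) m unfolding vector_field_def by blast
    have dX: "dM M X m (Y m) = G' (Y m)" using dM_ext[OF UX Ym] .
    have Gm: "G m = b" using UX(3) UX(2) m X(2) by simp
    have "\<forall>x\<in>M \<inter> UX. G x \<bullet> G x = X x \<bullet> X x" using UX(3) by simp
    moreover have "((\<lambda>x. G x \<bullet> G x) has_derivative (\<lambda>h. G m \<bullet> G' h + G' h \<bullet> G m)) (at m)"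
      using bounded_bilinear.FDERIV[OF bounded_bilinear_inner UX(4) UX(4)] .
    ultimately have dXX: "dM M (\<lambda>q. X q \<bullet> X q) m (Y m) = G m \<bullet> G' (Y m) + G' (Y m) \<bullet> G m"
      using dM_ext[OF UX(1,2) _ _ Ym, of "\<lambda>x. G x \<bullet> G x" "\<lambda>q. X q \<bullet> X q"] by simp
    have mc: "dM M (\<lambda>q. X q \<bullet> X q) m (Y m) = nabla Y X m \<bullet> X m + X m \<bullet> nabla Y X m"
      using MC[OF Yvf X(1) X(1)] .
    have tor: "nabla X Y m - nabla Y X m = dM M Y m (X m) - dM M X m (Y m)"
      using Tor[OF X(1) Yvf] unfolding lie_bracket_def .
    have "nabla Y X m \<bullet> b = G' (Y m) \<bullet> b"
      using dXX mc Gm X(2) by (simp add: inner_commute)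
    moreover have "nabla X Y m = nabla Y X m + (dM M Y m b - G' (Y m))"
      using tor X(2) dX by (simp add: algebra_simps)
    ultimately show ?thesis by (simp add: inner_add_left inner_diff_left)
  qed
  have key2: "alpha m b b \<bullet> v = - (dM M Y m b \<bullet> b)" if b: "b \<in> E m" for b
  proof -
    have bT: "b \<in> tangent_space M m" using b ET[OF m] by blast
    have "alpha m (P b m) (P b m) \<bullet> N m = proj_onto (E m) (dM M N m (P b m)) \<bullet> P b m"
      using assms(5) Psec[of b] Nsec m unfolding second_fundamental_form_def by blast
    hence e1: "alpha m b b \<bullet> N m = dM M N m b \<bullet> b" using Pid[OF b] proj_inner[OF sub[OF m] b] by simp
    have "alpha m b b \<bullet> Y m = 0" using assms(5) m b PE[OF m, of v] unfolding second_fundamental_form_def Y_def by blast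
    hence "alpha m b b \<bullet> v = alpha m b b \<bullet> N m" unfolding N_def Y_def by (simp add: inner_diff_right)
    thus ?thesis using e1 dN[OF bT] dY[OF bT] by simp
  qed
  obtain B0 where B0: "B0 \<subseteq> E m" "pairwise orthogonal B0" "\<And>x. x \<in> B0 \<Longrightarrow> norm x = 1"
    "independent B0" "span B0 = E m"
    using orthonormal_basis_subspace[OF sub[OF m]] by metis
  have "onb (E m) B0" unfolding onb_def using B0 independent_imp_finite by blast
  hence onbB: "onb (E m) (SOME B. onb (E m) B)" by (rule someI)
  define B where "B = (SOME B. onb (E m) B)"
  have BE: "B \<subseteq> E m" using onbB unfolding B_def onb_def by blast
  have Xex: "\<exists>X. vector_field M X \<and> X m = b" if "b \<in> E m" for b
    using Pvf Pid[OF that] by blast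
  have lhs: "mean_curvature E alpha m \<bullet> v = (\<Sum>b\<in>B. - (dM M Y m b \<bullet> b))"
    unfolding mean_curvature_def B_def[symmetric] Let_def
    using key2 BE by (simp add: inner_sum_left subset_iff)
  have rhs: "div_E M E nabla Y m = (\<Sum>b\<in>B. dM M Y m b \<bullet> b)"
    unfolding div_E_def B_def[symmetric] Let_def
  proof (rule sum.cong[OF refl])
    fix b assume "b \<in> B"
    hence b: "b \<in> E m" using BE by blast
    define X where "X = (SOME X. vector_field M X \<and> X m = b)"
    have X: "vector_field M X" "X m = b" using someI_ex[OF Xex[OF b]] unfolding X_def by blast+
    show "proj_onto (E m) (nabla X Y m) \<bullet> b = dM M Y m b \<bullet> b"
      using proj_inner[OF sub[OF m] b] key1[OF X b] by simp
  qed
  show ?thesis using lhs rhs unfolding Y_def P_def by (simp add: sum_negf)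
qed


end
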